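(* Let $A,B,C$ be two-dimensional complex vector spaces. For nonnegative integers $n,a,b,c$, let $\mu(n;a,b,c)$ denote the multiplicity of the $GL(A)\times GL(B)\times GL(C)$-module $S_{n-a,a}A\otimes S_{n-b,b}B\otimes S_{n-c,c}C$ inside $S^n(A\otimes B\otimes C)$. Suppose $c\ge a$, $c\ge b$ and $2c\le n$. Then $$\mu(n;a,b,c)=\begin{cases}0 & \text{if } c>a+b,\\ E\!\left(\frac{a+b-c}{2}\right)+1 & \text{if } c\le a+b \text{ and } n\ge a+b+c,\\ E\!\left(\frac{a+b-c}{2}\right)-E^+\!\left(\frac{a+b+c-n}{2}\right)+1 & \text{if } c\le a+b \text{ and } n\le a+b+c.\end{cases}$$
   Context: $S_{p,q}$ denotes the Schur functor associated to the partition $(p,q)$, $p\ge q\ge 0$. For a real number $x$, $E(x)$ is the largest integer $\le x$ and $E^+(x)$ is the smallest integer $\ge x$. *)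

theory Defs
  imports Complex_Main "HOL-Library.Function_Algebras"
begin

text \<open>A, B, C are copies of C^2 with bases a_0,a_1 (resp. b, c), indices
  False (first basis vector) and True (second). S^n(A \<otimes> B \<otimes> C) is the space of
  homogeneous polynomials of degree n in the 8 variables x_ijk (i,j,k :: bool).
  A polynomial is its coefficient function on exponent vectors (monomials)
  m :: bool \<times> bool \<times> bool \<Rightarrow> nat.
  The multiplicity of the irreducible module S_{n-a,a}A \<otimes> S_{n-b,b}B \<otimes> S_{n-c,c}C
  is the dimension of its space of highest weight vectors, i.e. the polynomials of
  degree n and weight ((n-a,a),(n-b,b),(n-c,c)) killed by the three raising operators
  E_A = sum_{j,k} x_{0jk} d/dx_{1jk} (similarly for B, C).\<close>

type_synonym idx = "bool \<times> bool \<times> bool"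
type_synonym monomial = "idx \<Rightarrow> nat"
type_synonym cpoly = "monomial \<Rightarrow> complex"

definition deg :: "monomial \<Rightarrow> nat" where
  "deg m = (\<Sum>t\<in>UNIV. m t)"

text \<open>the second component of the weight in factor A, B, C respectively\<close>
definition wtA :: "monomial \<Rightarrow> nat" where
  "wtA m = (\<Sum>t\<in>{t. fst t}. m t)"
definition wtB :: "monomial \<Rightarrow> nat" where
  "wtB m = (\<Sum>t\<in>{t. fst (snd t)}. m t)"
definition wtC :: "monomial \<Rightarrow> nat" where
  "wtC m = (\<Sum>t\<in>{t. snd (snd t)}. m t)"

text \<open>Polarization operator x_s d/dx_t applied to a coefficient function:
  the monomial m' contributes m'(t) * p(m') to m' - e_t + e_s.\<close>
definition polar :: "idx \<Rightarrow> idx \<Rightarrow> cpoly \<Rightarrow> cpoly" where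
  "polar s t p = (\<lambda>m. let m' = m(s := m s - 1, t := m t + 1) in
      if 1 \<le> m s then of_nat (m' t) * p m' else 0)"

definition raiseA :: "cpoly \<Rightarrow> cpoly" where
  "raiseA p = (\<lambda>m. \<Sum>jk\<in>UNIV. polar (False, jk) (True, jk) p m)"
definition raiseB :: "cpoly \<Rightarrow> cpoly" where
  "raiseB p = (\<lambda>m. \<Sum>ik\<in>UNIV. polar (fst ik, False, snd ik) (fst ik, True, snd ik) p m)"
definition raiseC :: "cpoly \<Rightarrow> cpoly" where
  "raiseC p = (\<lambda>m. \<Sum>ij\<in>UNIV. polar (fst ij, snd ij, False) (fst ij, snd ij, True) p m)"

definition hwv :: "nat \<Rightarrow> nat \<Rightarrow> nat \<Rightarrow> nat \<Rightarrow> cpoly set" where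
  "hwv n a b c = {p. (\<forall>m. p m \<noteq> 0 \<longrightarrow> deg m = n \<and> wtA m = a \<and> wtB m = b \<and> wtC m = c)
                   \<and> (\<forall>m. raiseA p m = 0 \<and> raiseB p m = 0 \<and> raiseC p m = 0)}"

definition cscale :: "complex \<Rightarrow> cpoly \<Rightarrow> cpoly" where
  "cscale r p = (\<lambda>m. r * p m)"

definition mu :: "nat \<Rightarrow> nat \<Rightarrow> nat \<Rightarrow> nat \<Rightarrow> nat" where
  "mu n a b c = vector_space.dim cscale (hwv n a b c)"

end

theory Submission
  imports Defs "HOL-Library.FuncSet"
begin

context vector_space begin

lemma fd_dim_mono:
  assumes "S \<subseteq> T" "T \<subseteq> span W" "finite W"
  shows "dim S \<le> dim T"
proof -
  obtain B where B: "B \<subseteq> T" "independent B" "T \<subseteq> span B" "card B = dim T"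
    by (rule basis_exists)
  have "finite B" using independent_span_bound[OF assms(3) B(2)] B(1) assms(2) by auto
  then have "dim S \<le> card B" using dim_le_card[of S B] assms(1) B(3) by auto
  with B(4) show ?thesis by simp
qed

lemma rank_nullity_sub:
  assumes lin: "Vector_Spaces.linear scale scale f" and S: "subspace S" and W: "S \<subseteq> span W" "finite W"
  shows "dim S = dim {x\<in>S. f x = 0} + dim (f ` S)"
proof -
  interpret lf: Vector_Spaces.linear scale scale f by fact
  let ?K = "{x\<in>S. f x = 0}"
  have K: "subspace ?K"
    using S unfolding subspace_def by (auto simp: lf.add lf.scale)
  obtain BK where BK: "BK \<subseteq> ?K" "independent BK" "?K \<subseteq> span BK" "card BK = dim ?K"
    by (rule basis_exists)
  obtain B where B: "BK \<subseteq> B" "B \<subseteq> S" "independent B" "S \<subseteq> span B"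
    using maximal_independent_subset_extend[of BK S] BK by auto
  have fB: "finite B" using independent_span_bound[OF W(2) B(3)] B(2) W(1) by auto
  have dS: "dim S = card B" using basis_card_eq_dim[OF B(2) B(4) B(3)] by simp
  define C where "C = B - BK"
  have fBK: "finite BK" using fB B(1) finite_subset by auto
  have fC: "finite C" using fB C_def by auto
  have cardB: "card B = card BK + card C"
    unfolding C_def using card_Diff_subset[OF fBK B(1)] card_mono[OF fB B(1)] by simp
  have spanBK: "span BK \<subseteq> ?K" using span_minimal[OF BK(1) K] .
  have spanB: "span B \<subseteq> S" using span_minimal[OF B(2) S] .
  have key: "y = 0" if y: "y \<in> span C" "f y = 0" for y
  proof -
    have "span C \<subseteq> span B" by (rule span_mono) (auto simp: C_def)
    then have "y \<in> S" using y spanB by auto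
    then have "y \<in> span BK" using y BK(3) by auto
    then obtain u' where u': "y = (\<Sum>v\<in>BK. u' v *s v)"
      using span_finite[OF fBK] by auto
    obtain u where u: "y = (\<Sum>v\<in>C. u v *s v)"
      using span_finite[OF fC] y(1) by auto
    define g where "g v = (if v \<in> C then u v else - u' v)" for v
    have BU: "B = C \<union> BK" "C \<inter> BK = {}" using B(1) C_def by auto
    have "(\<Sum>v\<in>B. g v *s v) = (\<Sum>v\<in>C. g v *s v) + (\<Sum>v\<in>BK. g v *s v)"
      unfolding BU(1) by (rule sum.union_disjoint[OF fC fBK BU(2)])
    also have "(\<Sum>v\<in>C. g v *s v) = y" unfolding u by (rule sum.cong) (auto simp: g_def)
    also have "(\<Sum>v\<in>BK. g v *s v) = (\<Sum>v\<in>BK. (- u' v) *s v)"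
      by (rule sum.cong) (use BU in \<open>auto simp: g_def\<close>)
    also have "\<dots> = - y" unfolding u' by (simp add: sum_negf)
    finally have z: "(\<Sum>v\<in>B. g v *s v) = 0" by simp
    have "\<forall>v\<in>C. u v = 0"
    proof
      fix v assume "v \<in> C"
      then have "g v = 0" using independentD[OF B(3) fB subset_refl z] BU by auto
      then show "u v = 0" using \<open>v \<in> C\<close> by (simp add: g_def)
    qed
    then show "y = 0" unfolding u by simp
  qed
  have injC: "inj_on f (span C)"
    using lf.inj_on_iff_eq_0[of "span C"] key by auto
  have indC: "independent C" using independent_mono[OF B(3)] C_def by auto
  have indep: "independent (f ` C)"
    using lf.independent_injective_image[OF indC injC] .
  have cardfC: "card (f ` C) = card C"
    using card_image inj_on_subset[OF injC span_superset] by blast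
  have sp: "f ` S \<subseteq> span (f ` C)"
  proof
    fix z assume "z \<in> f ` S"
    then obtain x where x: "x \<in> S" "z = f x" by auto
    have "B = BK \<union> C" using B(1) C_def by auto
    then have "x \<in> span (BK \<union> C)" using x B(4) by auto
    then obtain y1 y2 where y: "x = y1 + y2" "y1 \<in> span BK" "y2 \<in> span C"
      unfolding span_Un by auto
    have "f y1 = 0" using y(2) spanBK by auto
    then have "z = f y2" using x y by (simp add: lf.add)
    then show "z \<in> span (f ` C)" using y(3) lf.span_image by auto
  qed
  have sub: "f ` C \<subseteq> f ` S" using B(2) C_def by auto
  have "dim (f ` S) = card (f ` C)"
    using basis_card_eq_dim[OF sub sp indep] by simp
  then show ?thesis using dS cardB BK(4) cardfC by simp
qed

end

interpretation cs: vector_space cscale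
  by unfold_locales (auto simp: cscale_def fun_eq_iff algebra_simps)

lemma sum_fun_apply: "(\<Sum>i\<in>I. f i) x = (\<Sum>i\<in>I. f i x)"
  by (induct I rule: infinite_finite_induct) auto

definition Xop :: "idx \<Rightarrow> cpoly \<Rightarrow> cpoly" where
  "Xop s p = (\<lambda>m. if 1 \<le> m s then p (m(s := m s - 1)) else 0)"
definition Dop :: "idx \<Rightarrow> cpoly \<Rightarrow> cpoly" where
  "Dop t p = (\<lambda>m. of_nat (m t + 1) * p (m(t := m t + 1)))"
definition Yop :: "idx \<Rightarrow> idx \<Rightarrow> cpoly \<Rightarrow> cpoly" where
  "Yop s t p = Xop s (Dop t p)"

lemma XX: "Xop s (Xop u p) = Xop u (Xop s p)"
  by (cases "s = u") (auto simp: Xop_def fun_eq_iff fun_upd_twist)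

lemma DD: "Dop s (Dop u p) = Dop u (Dop s p)"
  by (cases "s = u") (auto simp: Dop_def fun_eq_iff fun_upd_twist)

lemma DX: "s \<noteq> t \<Longrightarrow> Dop t (Xop s p) = Xop s (Dop t p)"
  by (auto simp: Xop_def Dop_def fun_eq_iff fun_upd_twist)

lemma DX_same: "Dop t (Xop t p) = Xop t (Dop t p) + p"
proof (rule ext)
  fix m
  show "Dop t (Xop t p) m = (Xop t (Dop t p) + p) m"
    by (cases "m t = 0") (auto simp: Xop_def Dop_def algebra_simps fun_upd_idem)
qed

lemma X_add: "Xop s (p + q) = Xop s p + Xop s q"
  by (auto simp: Xop_def fun_eq_iff)
lemma D_add: "Dop s (p + q) = Dop s p + Dop s q"
  by (auto simp: Dop_def fun_eq_iff algebra_simps)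

lemma Y_comp: "Yop s t (Yop u v p) = Xop s (Xop u (Dop t (Dop v p))) + (if t = u then Yop s v p else 0)"
proof (cases "t = u")
  case True
  then show ?thesis by (simp add: Yop_def DX_same X_add)
next
  case False
  then show ?thesis by (simp add: Yop_def DX)
qed

lemma Y_comm_pt: "Yop s t (Yop u v p) m = Yop u v (Yop s t p) m
   + (if t = u then Yop s v p m else 0) - (if v = s then Yop u t p m else 0)"
  using Y_comp[of s t u v p] Y_comp[of u v s t p]
  by (simp add: XX[of s u] DD[of t v])

lemma Y_same: "Yop s s p m = of_nat (m s) * p m"
  by (cases "m s = 0") (auto simp: Yop_def Xop_def Dop_def fun_upd_idem)

lemma Y_eq: "s \<noteq> t \<Longrightarrow> Yop s t p m =
   (if 1 \<le> m s then of_nat (m t + 1) * p (m(s := m s - 1, t := m t + 1)) else 0)"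
  by (simp add: Yop_def Xop_def Dop_def)

lemma Y_sum: "Yop s t (\<lambda>m. \<Sum>i\<in>I. g i m) m0 = (\<Sum>i\<in>I. Yop s t (g i) m0)"
  by (simp add: Yop_def Xop_def Dop_def sum_distrib_left)

lemma Y_add: "Yop s t (p + q) = Yop s t p + Yop s t q"
  by (simp add: Yop_def X_add D_add)
lemma Y_scale: "Yop s t (cscale c p) = cscale c (Yop s t p)"
  by (auto simp: Yop_def Xop_def Dop_def cscale_def fun_eq_iff)
lemma Y_zero: "Yop s t 0 = 0"
  by (auto simp: Yop_def Xop_def Dop_def fun_eq_iff)

definition Sop :: "(bool \<times> bool \<Rightarrow> idx) \<Rightarrow> (bool \<times> bool \<Rightarrow> idx) \<Rightarrow> cpoly \<Rightarrow> cpoly" where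
  "Sop f g p = (\<lambda>m. \<Sum>r\<in>UNIV. Yop (f r) (g r) p m)"

lemma S_comm_pt: "Sop f g (Sop f' g' p) m = Sop f' g' (Sop f g p) m
   + (\<Sum>r\<in>UNIV. \<Sum>r'\<in>UNIV. if g r = f' r' then Yop (f r) (g' r') p m else 0)
   - (\<Sum>r\<in>UNIV. \<Sum>r'\<in>UNIV. if g' r' = f r then Yop (f' r') (g r) p m else 0)"
proof -
  have "Sop f g (Sop f' g' p) m = (\<Sum>r\<in>UNIV. \<Sum>r'\<in>UNIV. Yop (f r) (g r) (Yop (f' r') (g' r') p) m)"
    by (simp add: Sop_def Y_sum)
  also have "\<dots> = (\<Sum>r\<in>UNIV. \<Sum>r'\<in>UNIV. Yop (f' r') (g' r') (Yop (f r) (g r) p) m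
       + (if g r = f' r' then Yop (f r) (g' r') p m else 0) - (if g' r' = f r then Yop (f' r') (g r) p m else 0))"
    by (intro sum.cong refl) (rule Y_comm_pt)
  also have "\<dots> = (\<Sum>r\<in>UNIV. \<Sum>r'\<in>UNIV. Yop (f' r') (g' r') (Yop (f r) (g r) p) m)
       + (\<Sum>r\<in>UNIV. \<Sum>r'\<in>UNIV. if g r = f' r' then Yop (f r) (g' r') p m else 0)
       - (\<Sum>r\<in>UNIV. \<Sum>r'\<in>UNIV. if g' r' = f r then Yop (f' r') (g r) p m else 0)"
    by (simp add: sum.distrib sum_subtractf)
  also have "(\<Sum>r\<in>UNIV. \<Sum>r'\<in>UNIV. Yop (f' r') (g' r') (Yop (f r) (g r) p) m) = Sop f' g' (Sop f g p) m"
  proof -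
    have "Sop f' g' (Sop f g p) m = (\<Sum>r'\<in>UNIV. \<Sum>r\<in>UNIV. Yop (f' r') (g' r') (Yop (f r) (g r) p) m)"
      by (simp add: Sop_def Y_sum)
    then show ?thesis by (simp only:) (rule sum.swap)
  qed
  finally show ?thesis .
qed

lemma S_add: "Sop f g (p + q) = Sop f g p + Sop f g q"
  by (simp add: Sop_def Y_add sum.distrib fun_eq_iff)
lemma S_scale: "Sop f g (cscale c p) = cscale c (Sop f g p)"
  by (simp add: Sop_def Y_scale sum_distrib_left fun_eq_iff) (simp add: cscale_def sum_distrib_left)
lemma S_zero: "Sop f g 0 = 0"
  by (simp add: Sop_def Y_zero fun_eq_iff)

lemma S_linear: "Vector_Spaces.linear cscale cscale (Sop f g)"
  unfolding Vector_Spaces.linear_iff using cs.vector_space_axioms by (auto simp: S_add S_scale)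


datatype dir = DA | DB | DC

lemma all_dir: "(\<forall>d. P d) \<longleftrightarrow> P DA \<and> P DB \<and> P DC"
  by (metis dir.exhaust)

fun co :: "dir \<Rightarrow> idx \<Rightarrow> bool" where
  "co DA t = fst t" | "co DB t = fst (snd t)" | "co DC t = snd (snd t)"
fun lo :: "dir \<Rightarrow> bool \<times> bool \<Rightarrow> idx" where
  "lo DA r = (False, fst r, snd r)" | "lo DB r = (fst r, False, snd r)" | "lo DC r = (fst r, snd r, False)"
fun hi :: "dir \<Rightarrow> bool \<times> bool \<Rightarrow> idx" where
  "hi DA r = (True, fst r, snd r)" | "hi DB r = (fst r, True, snd r)" | "hi DC r = (fst r, snd r, True)"

abbreviation Eop :: "dir \<Rightarrow> cpoly \<Rightarrow> cpoly" where "Eop d \<equiv> Sop (lo d) (hi d)"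
abbreviation Fop :: "dir \<Rightarrow> cpoly \<Rightarrow> cpoly" where "Fop d \<equiv> Sop (hi d) (lo d)"

definition wt :: "dir \<Rightarrow> monomial \<Rightarrow> nat" where "wt d m = (\<Sum>t\<in>{t. co d t}. m t)"

lemma UNIV_bb: "(UNIV :: (bool \<times> bool) set) = {(False,False),(False,True),(True,False),(True,True)}"
  by (auto simp: UNIV_bool)

lemma UNIV_idx: "(UNIV :: idx set) = {(False,False,False),(False,False,True),(False,True,False),(False,True,True),
   (True,False,False),(True,False,True),(True,True,False),(True,True,True)}"
  by (auto simp: UNIV_bool)

lemma deg_expand: "deg m = m (False,False,False) + m (False,False,True) + m (False,True,False) + m (False,True,True)
   + m (True,False,False) + m (True,False,True) + m (True,True,False) + m (True,True,True)"
  by (simp add: deg_def UNIV_idx)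

lemma wt_expand:
  "wt DA m = m (True,False,False) + m (True,False,True) + m (True,True,False) + m (True,True,True)"
  "wt DB m = m (False,True,False) + m (False,True,True) + m (True,True,False) + m (True,True,True)"
  "wt DC m = m (False,False,True) + m (False,True,True) + m (True,False,True) + m (True,True,True)"
proof -
  have "{t. co DA t} = {(True,False,False),(True,False,True),(True,True,False),(True,True,True)}"
    by (auto simp: UNIV_bool)
  then show "wt DA m = m (True,False,False) + m (True,False,True) + m (True,True,False) + m (True,True,True)"
    by (simp add: wt_def)
  have "{t. co DB t} = {(False,True,False),(False,True,True),(True,True,False),(True,True,True)}"
    by (auto simp: UNIV_bool)
  then show "wt DB m = m (False,True,False) + m (False,True,True) + m (True,True,False) + m (True,True,True)"
    by (simp add: wt_def)
  have "{t. co DC t} = {(False,False,True),(False,True,True),(True,False,True),(True,True,True)}"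
    by (auto simp: UNIV_bool)
  then show "wt DC m = m (False,False,True) + m (False,True,True) + m (True,False,True) + m (True,True,True)"
    by (simp add: wt_def)
qed

lemma EE_comm: "d \<noteq> d' \<Longrightarrow> Eop d (Eop d' p) = Eop d' (Eop d p)"
proof (rule ext)
  fix m assume "d \<noteq> d'"
  then have "(\<Sum>r\<in>UNIV. \<Sum>r'\<in>UNIV. if hi d r = lo d' r' then Yop (lo d r) (hi d' r') p m else 0)
     = (\<Sum>r\<in>UNIV. \<Sum>r'\<in>UNIV. if hi d' r' = lo d r then Yop (lo d' r') (hi d r) p m else 0)"
    by (cases d; cases d'; simp add: UNIV_bb)
  then show "Eop d (Eop d' p) m = Eop d' (Eop d p) m"
    by (simp add: S_comm_pt[of "lo d" "hi d" "lo d'" "hi d'" p m])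
qed

lemma EF_comm: "d \<noteq> d' \<Longrightarrow> Eop d' (Fop d p) = Fop d (Eop d' p)"
proof (rule ext)
  fix m assume "d \<noteq> d'"
  then have "(\<Sum>r\<in>UNIV. \<Sum>r'\<in>UNIV. if hi d' r = hi d r' then Yop (lo d' r) (lo d r') p m else 0)
     = (\<Sum>r\<in>UNIV. \<Sum>r'\<in>UNIV. if lo d r' = lo d' r then Yop (hi d r') (hi d' r) p m else 0)"
    by (cases d; cases d'; simp add: UNIV_bb)
  then show "Eop d' (Fop d p) m = Fop d (Eop d' p) m"
    by (simp add: S_comm_pt[of "lo d'" "hi d'" "hi d" "lo d" p m])
qed

lemma EF_H: "Eop d (Fop d p) m = Fop d (Eop d p) m + of_int (int (deg m) - 2 * int (wt d m)) * p m"
proof -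
  have "(\<Sum>r\<in>UNIV. \<Sum>r'\<in>UNIV. if hi d r = hi d r' then Yop (lo d r) (lo d r') p m else 0)
     - (\<Sum>r\<in>UNIV. \<Sum>r'\<in>UNIV. if lo d r' = lo d r then Yop (hi d r') (hi d r) p m else 0)
     = of_int (int (deg m) - 2 * int (wt d m)) * p m"
    by (cases d; simp add: UNIV_bb Y_same deg_expand wt_expand algebra_simps)
  then show ?thesis
    by (simp add: S_comm_pt[of "lo d" "hi d" "hi d" "lo d" p m])
qed


lemma sum_upd_int: "finite S \<Longrightarrow>
   int (\<Sum>x\<in>S. (m(s:=v)) x) = int (\<Sum>x\<in>S. m x) + (if s \<in> S then int v - int (m s) else 0)"
proof (cases "s \<in> S")
  case True
  assume f: "finite S"
  have "(\<Sum>x\<in>S. (m(s:=v)) x) = (m(s:=v)) s + (\<Sum>x\<in>S-{s}. (m(s:=v)) x)"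
    using sum.remove[OF f True] by blast
  also have "(\<Sum>x\<in>S-{s}. (m(s:=v)) x) = (\<Sum>x\<in>S-{s}. m x)" by (rule sum.cong) auto
  finally have 1: "(\<Sum>x\<in>S. (m(s:=v)) x) = v + (\<Sum>x\<in>S-{s}. m x)" by simp
  have 2: "(\<Sum>x\<in>S. m x) = m s + (\<Sum>x\<in>S-{s}. m x)"
    using sum.remove[OF f True] by blast
  show ?thesis using 1 2 True by simp
next
  case False
  then show ?thesis by (auto intro!: sum.cong)
qed

lemma Y_supp: assumes "s \<noteq> t" "Yop s t p m \<noteq> 0"
  shows "\<exists>m'. p m' \<noteq> 0 \<and> (\<forall>S. int (\<Sum>x\<in>S. m' x) = int (\<Sum>x\<in>S. m x)
        - (if s \<in> S then 1 else 0) + (if t \<in> S then 1 else 0))"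
proof -
  have ms: "1 \<le> m s" and p: "p (m(s := m s - 1, t := m t + 1)) \<noteq> 0"
    using assms by (auto simp: Y_eq split: if_splits)
  show ?thesis
  proof (intro exI conjI allI)
    show "p (m(s := m s - 1, t := m t + 1)) \<noteq> 0" by fact
    fix S :: "idx set"
    have f: "finite S" by simp
    show "int (\<Sum>x\<in>S. (m(s := m s - 1, t := m t + 1)) x) = int (\<Sum>x\<in>S. m x)
        - (if s \<in> S then 1 else 0) + (if t \<in> S then 1 else 0)"
      using sum_upd_int[OF f, of "m(s := m s - 1)" t "m t + 1"] sum_upd_int[OF f, of m s "m s - 1"]
        assms(1) ms by auto
  qed
qed

lemma co_lohi: "co d (lo d r) = False" "co d (hi d r) = True"
   "d' \<noteq> d \<Longrightarrow> co d' (lo d r) = co d' (hi d r)" "lo d r \<noteq> hi d r"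
  by (cases d; cases d'; auto)+

lemma deg_wt_int: "int (deg m) = int (\<Sum>x\<in>UNIV. m x)" "int (wt d m) = int (\<Sum>x\<in>{t. co d t}. m x)"
  by (simp_all add: deg_def wt_def)

lemma E_supp: assumes "Eop d p m \<noteq> 0"
  shows "\<exists>m'. p m' \<noteq> 0 \<and> deg m' = deg m \<and> wt d m' = wt d m + 1 \<and> (\<forall>d'. d' \<noteq> d \<longrightarrow> wt d' m' = wt d' m)"
proof -
  obtain r where r: "Yop (lo d r) (hi d r) p m \<noteq> 0"
    using assms unfolding Sop_def by (meson sum.not_neutral_contains_not_neutral)
  obtain m' where m': "p m' \<noteq> 0" and S: "\<And>S. int (\<Sum>x\<in>S. m' x) = int (\<Sum>x\<in>S. m x)
        - (if lo d r \<in> S then 1 else 0) + (if hi d r \<in> S then 1 else 0)"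
    using Y_supp[OF co_lohi(4) r] by blast
  have "int (deg m') = int (deg m)" using S[of UNIV] by (simp add: deg_def)
  moreover have "int (wt d m') = int (wt d m) + 1" using S[of "{t. co d t}"] by (simp add: wt_def co_lohi)
  moreover have "int (wt d' m') = int (wt d' m)" if "d' \<noteq> d" for d'
    using S[of "{t. co d' t}"] co_lohi(3)[OF that, of r] by (simp add: wt_def)
  ultimately show ?thesis using m' by (intro exI[of _ m']) auto
qed

lemma F_supp: assumes "Fop d p m \<noteq> 0"
  shows "\<exists>m'. p m' \<noteq> 0 \<and> deg m' = deg m \<and> wt d m' + 1 = wt d m \<and> (\<forall>d'. d' \<noteq> d \<longrightarrow> wt d' m' = wt d' m)"
proof -
  obtain r where r: "Yop (hi d r) (lo d r) p m \<noteq> 0"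
    using assms unfolding Sop_def by (meson sum.not_neutral_contains_not_neutral)
  obtain m' where m': "p m' \<noteq> 0" and S: "\<And>S. int (\<Sum>x\<in>S. m' x) = int (\<Sum>x\<in>S. m x)
        - (if hi d r \<in> S then 1 else 0) + (if lo d r \<in> S then 1 else 0)"
    using Y_supp[OF co_lohi(4)[symmetric] r] by blast
  have "int (deg m') = int (deg m)" using S[of UNIV] by (simp add: deg_def)
  moreover have "int (wt d m') + 1 = int (wt d m)" using S[of "{t. co d t}"] by (simp add: wt_def co_lohi)
  moreover have "int (wt d' m') = int (wt d' m)" if "d' \<noteq> d" for d'
    using S[of "{t. co d' t}"] co_lohi(3)[OF that, of r] by (simp add: wt_def)
  ultimately show ?thesis using m' by (intro exI[of _ m']) auto
qed

definition inW :: "nat \<Rightarrow> (dir \<Rightarrow> nat) \<Rightarrow> cpoly \<Rightarrow> bool" where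
  "inW n w p \<longleftrightarrow> (\<forall>m. p m \<noteq> 0 \<longrightarrow> deg m = n \<and> (\<forall>d. wt d m = w d))"

definition Z :: "nat \<Rightarrow> (dir \<Rightarrow> nat) \<Rightarrow> dir set \<Rightarrow> cpoly set" where
  "Z n w S = {p. inW n w p \<and> (\<forall>d\<in>S. Eop d p = 0)}"

lemma E_inW: assumes "inW n w p" shows "inW n (w(d := w d - 1)) (Eop d p)"
  unfolding inW_def
proof (intro allI impI)
  fix m assume "Eop d p m \<noteq> 0"
  then obtain m' where "p m' \<noteq> 0" "deg m' = deg m" "wt d m' = wt d m + 1" "\<forall>d'. d' \<noteq> d \<longrightarrow> wt d' m' = wt d' m"
    using E_supp by blast
  then show "deg m = n \<and> (\<forall>d'. wt d' m = (w(d := w d - 1)) d')"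
    using assms unfolding inW_def by (metis add_diff_cancel_right' fun_upd_apply)
qed

lemma E_zero_wt: assumes "inW n w p" "w d = 0" shows "Eop d p = 0"
proof (rule ext, rule ccontr)
  fix m assume "Eop d p m \<noteq> 0 m"
  then obtain m' where "p m' \<noteq> 0" "wt d m' = wt d m + 1"
    using E_supp by fastforce
  then show False using assms unfolding inW_def by force
qed

lemma F_inW: assumes "inW n w p" shows "inW n (w(d := w d + 1)) (Fop d p)"
  unfolding inW_def
proof (intro allI impI)
  fix m assume "Fop d p m \<noteq> 0"
  then obtain m' where "p m' \<noteq> 0" "deg m' = deg m" "wt d m' + 1 = wt d m" "\<forall>d'. d' \<noteq> d \<longrightarrow> wt d' m' = wt d' m"
    using F_supp by blast
  then show "deg m = n \<and> (\<forall>d'. wt d' m = (w(d := w d + 1)) d')"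
    using assms unfolding inW_def by (metis fun_upd_apply)
qed

lemma inW_add: "inW n w p \<Longrightarrow> inW n w q \<Longrightarrow> inW n w (p + q)"
  unfolding inW_def by (metis add.right_neutral plus_fun_apply)
lemma inW_scale: "inW n w p \<Longrightarrow> inW n w (cscale c p)"
  unfolding inW_def cscale_def by auto
lemma inW_zero: "inW n w 0"
  unfolding inW_def by auto

lemma Z_subspace: "cs.subspace (Z n w S)"
  unfolding cs.subspace_def
proof (intro conjI ballI allI)
  show "0 \<in> Z n w S" by (simp add: Z_def inW_zero S_zero)
next
  fix x y assume "x \<in> Z n w S" "y \<in> Z n w S"
  then show "x + y \<in> Z n w S" by (simp add: Z_def inW_add S_add)
next
  fix c x assume "x \<in> Z n w S"
  then show "cscale c x \<in> Z n w S" by (simp add: Z_def inW_scale S_scale)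
qed


definition Mn :: "nat \<Rightarrow> monomial set" where "Mn n = {m. deg m = n}"

lemma finite_Mn: "finite (Mn n)"
proof -
  have "Mn n \<subseteq> PiE UNIV (\<lambda>_. {..n})"
  proof
    fix m assume "m \<in> Mn n"
    then have "m t \<le> n" for t unfolding Mn_def deg_def using member_le_sum[of t UNIV m] by auto
    then show "m \<in> PiE UNIV (\<lambda>_. {..n})" by (auto simp: PiE_def extensional_def)
  qed
  moreover have "finite (PiE UNIV (\<lambda>_::idx. {..n}))" by (rule finite_PiE) auto
  ultimately show ?thesis by (rule finite_subset)
qed

definition wfac :: "monomial \<Rightarrow> nat" where "wfac m = (\<Prod>t\<in>UNIV. fact (m t))"
definition ip :: "nat \<Rightarrow> cpoly \<Rightarrow> cpoly \<Rightarrow> complex" where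
  "ip n p q = (\<Sum>m\<in>Mn n. of_nat (wfac m) * p m * cnj (q m))"

lemma prod_upd2: fixes m :: monomial assumes "s \<noteq> t"
  shows "(\<Prod>x\<in>UNIV. f ((m(s:=a, t:=b)) x)) = f a * f b * (\<Prod>x\<in>UNIV-{s}-{t}. f (m x))"
    and "(\<Prod>x\<in>UNIV. f (m x)) = f (m s) * f (m t) * (\<Prod>x\<in>UNIV-{s}-{t}. f (m x))"
proof -
  have t: "t \<in> UNIV - {s}" using assms by auto
  have "(\<Prod>x\<in>UNIV. f ((m(s:=a, t:=b)) x)) = f ((m(s:=a, t:=b)) s) * (\<Prod>x\<in>UNIV-{s}. f ((m(s:=a, t:=b)) x))"
    by (rule prod.remove) auto
  also have "(\<Prod>x\<in>UNIV-{s}. f ((m(s:=a, t:=b)) x)) = f ((m(s:=a, t:=b)) t) * (\<Prod>x\<in>UNIV-{s}-{t}. f ((m(s:=a, t:=b)) x))"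
    by (rule prod.remove[OF _ t]) auto
  also have "(\<Prod>x\<in>UNIV-{s}-{t}. f ((m(s:=a, t:=b)) x)) = (\<Prod>x\<in>UNIV-{s}-{t}. f (m x))"
    by (rule prod.cong) auto
  moreover have e1: "(m(s:=a, t:=b)) s = a" using assms by simp
  moreover have e2: "(m(s:=a, t:=b)) t = b" by simp
  ultimately show "(\<Prod>x\<in>UNIV. f ((m(s:=a, t:=b)) x)) = f a * f b * (\<Prod>x\<in>UNIV-{s}-{t}. f (m x))"
    by (simp only: mult.assoc)
  have "(\<Prod>x\<in>UNIV. f (m x)) = f (m s) * (\<Prod>x\<in>UNIV-{s}. f (m x))"
    by (rule prod.remove) auto
  also have "(\<Prod>x\<in>UNIV-{s}. f (m x)) = f (m t) * (\<Prod>x\<in>UNIV-{s}-{t}. f (m x))"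
    by (rule prod.remove[OF _ t]) auto
  finally show "(\<Prod>x\<in>UNIV. f (m x)) = f (m s) * f (m t) * (\<Prod>x\<in>UNIV-{s}-{t}. f (m x))"
    by (simp add: mult.assoc)
qed

lemma wfac_shift: assumes "s \<noteq> t" "1 \<le> m s"
  shows "wfac (m(s := m s - 1, t := m t + 1)) * m s = wfac m * (m t + 1)"
proof -
  obtain k where k: "m s = Suc k" using assms(2) by (cases "m s") auto
  let ?R = "\<Prod>x\<in>UNIV-{s}-{t}. fact (m x) :: nat"
  have 1: "wfac (m(s := m s - 1, t := m t + 1)) = fact (m s - 1) * fact (m t + 1) * ?R"
    unfolding wfac_def by (rule prod_upd2(1)[OF assms(1)])
  have 2: "wfac m = fact (m s) * fact (m t) * ?R"
    unfolding wfac_def by (rule prod_upd2(2)[OF assms(1)])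
  have f1: "fact (m s) = m s * fact (m s - 1)" using k by simp
  have f2: "fact (m t + 1) = (m t + 1) * fact (m t)" by simp
  show ?thesis unfolding 1 2 f1 f2 by (simp only: ac_simps)
qed

lemma deg_shift: assumes "s \<noteq> t" "1 \<le> m s"
  shows "deg (m(s := m s - 1, t := m t + 1)) = deg m"
proof -
  have "int (deg (m(s := m s - 1, t := m t + 1))) = int (deg m)"
    unfolding deg_def
    using sum_upd_int[of UNIV "m(s := m s - 1)" t "m t + 1"] sum_upd_int[of UNIV m s "m s - 1"] assms
    by auto
  then show ?thesis by simp
qed

lemma Y_adj: assumes st: "s \<noteq> t"
  shows "ip n (Yop s t p) q = ip n p (Yop t s q)"
proof -
  define \<sigma> where "\<sigma> m = m(s := m s - 1, t := m t + 1)" for m :: monomial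
  define \<tau> where "\<tau> m = m(t := m t - 1, s := m s + 1)" for m :: monomial
  let ?S = "{m\<in>Mn n. 1 \<le> m s}" and ?T = "{m\<in>Mn n. 1 \<le> m t}"
  have "ip n (Yop s t p) q = (\<Sum>m\<in>Mn n. if 1 \<le> m s then of_nat (wfac m) * (of_nat (m t + 1) * p (\<sigma> m)) * cnj (q m) else 0)"
    unfolding ip_def by (rule sum.cong) (auto simp: Y_eq[OF st] \<sigma>_def)
  also have "\<dots> = (\<Sum>m\<in>?S. of_nat (wfac m) * (of_nat (m t + 1) * p (\<sigma> m)) * cnj (q m))"
    by (rule sum.inter_filter[OF finite_Mn, symmetric])
  also have "\<dots> = (\<Sum>m\<in>?T. of_nat (wfac m) * p m * cnj (of_nat (m s + 1) * q (\<tau> m)))"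
  proof (rule sum.reindex_bij_witness[of _ \<tau> \<sigma>])
    fix m assume m: "m \<in> ?S"
    show "\<tau> (\<sigma> m) = m" using m st by (auto simp: \<sigma>_def \<tau>_def fun_eq_iff)
    show "\<sigma> m \<in> ?T" using m st deg_shift[OF st, of m] by (auto simp: \<sigma>_def Mn_def)
    have W0: "wfac (\<sigma> m) * m s = wfac m * (m t + 1)" unfolding \<sigma>_def using wfac_shift[OF st] m by auto
    have W: "(of_nat (wfac (\<sigma> m)) * of_nat (m s) :: complex) = of_nat (wfac m) * of_nat (m t + 1)"
      by (simp only: of_nat_mult[symmetric] W0)
    have ts: "\<tau> (\<sigma> m) = m" using m st by (auto simp: \<sigma>_def \<tau>_def fun_eq_iff)
    have ss: "\<sigma> m s + 1 = m s" using m st by (auto simp: \<sigma>_def)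
    have "of_nat (wfac (\<sigma> m)) * p (\<sigma> m) * cnj (of_nat (\<sigma> m s + 1) * q (\<tau> (\<sigma> m)))
        = (of_nat (wfac (\<sigma> m)) * of_nat (m s)) * p (\<sigma> m) * cnj (q m)"
      unfolding ts ss by (simp add: ac_simps)
    also have "\<dots> = (of_nat (wfac m) * of_nat (m t + 1)) * p (\<sigma> m) * cnj (q m)"
      by (simp only: W)
    finally show "of_nat (wfac (\<sigma> m)) * p (\<sigma> m) * cnj (of_nat (\<sigma> m s + 1) * q (\<tau> (\<sigma> m)))
        = of_nat (wfac m) * (of_nat (m t + 1) * p (\<sigma> m)) * cnj (q m)"
      by (simp only: ac_simps)
  next
    fix m assume m: "m \<in> ?T"
    show "\<sigma> (\<tau> m) = m" using m st by (auto simp: \<sigma>_def \<tau>_def fun_eq_iff)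
    have "deg (\<tau> m) = deg m" unfolding \<tau>_def
      using deg_shift[OF st[symmetric], of m] m by (simp add: fun_upd_twist[OF st])
    then show "\<tau> m \<in> ?S" using m st by (auto simp: \<tau>_def Mn_def)
  qed
  also have "\<dots> = (\<Sum>m\<in>Mn n. if 1 \<le> m t then of_nat (wfac m) * p m * cnj (of_nat (m s + 1) * q (\<tau> m)) else 0)"
    by (rule sum.inter_filter[OF finite_Mn])
  also have "\<dots> = ip n p (Yop t s q)"
    unfolding ip_def by (rule sum.cong) (auto simp: Y_eq[OF st[symmetric]] \<tau>_def)
  finally show ?thesis .
qed


lemma ip_sum_left: "ip n (\<lambda>m. \<Sum>r\<in>I. g r m) q = (\<Sum>r\<in>I. ip n (g r) q)"
proof -
  have "ip n (\<lambda>m. \<Sum>r\<in>I. g r m) q = (\<Sum>m\<in>Mn n. \<Sum>r\<in>I. of_nat (wfac m) * g r m * cnj (q m))"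
    unfolding ip_def by (simp add: sum_distrib_left sum_distrib_right)
  also have "\<dots> = (\<Sum>r\<in>I. \<Sum>m\<in>Mn n. of_nat (wfac m) * g r m * cnj (q m))" by (rule sum.swap)
  finally show ?thesis by (simp add: ip_def)
qed

lemma ip_sum_right: "ip n p (\<lambda>m. \<Sum>r\<in>I. g r m) = (\<Sum>r\<in>I. ip n p (g r))"
proof -
  have "ip n p (\<lambda>m. \<Sum>r\<in>I. g r m) = (\<Sum>m\<in>Mn n. \<Sum>r\<in>I. of_nat (wfac m) * p m * cnj (g r m))"
    unfolding ip_def by (simp add: sum_distrib_left)
  also have "\<dots> = (\<Sum>r\<in>I. \<Sum>m\<in>Mn n. of_nat (wfac m) * p m * cnj (g r m))" by (rule sum.swap)
  finally show ?thesis by (simp add: ip_def)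
qed

lemma S_adj: assumes "\<And>r. f r \<noteq> g r"
  shows "ip n (Sop f g p) q = ip n p (Sop g f q)"
proof -
  have "ip n (Sop f g p) q = (\<Sum>r\<in>UNIV. ip n (Yop (f r) (g r) p) q)"
    unfolding Sop_def by (rule ip_sum_left)
  also have "\<dots> = (\<Sum>r\<in>UNIV. ip n p (Yop (g r) (f r) q))"
    using Y_adj[OF assms] by simp
  also have "\<dots> = ip n p (Sop g f q)"
    unfolding Sop_def by (rule ip_sum_right[symmetric])
  finally show ?thesis .
qed

lemma ip_add_left: "ip n (p + q) r = ip n p r + ip n q r"
  unfolding ip_def by (simp add: algebra_simps sum.distrib)
lemma ip_scale_left: "ip n (cscale c p) r = c * ip n p r"
  unfolding ip_def cscale_def by (simp add: algebra_simps sum_distrib_left)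
lemma ip_zero_left: "ip n 0 r = 0"
  unfolding ip_def by simp

lemma Re_ip: "Re (ip n p p) = (\<Sum>m\<in>Mn n. real (wfac m) * (cmod (p m))\<^sup>2)"
proof -
  have "Re (of_nat (wfac m) * p m * cnj (p m)) = real (wfac m) * (cmod (p m))\<^sup>2" for m
    using cmod_power2[of "p m"] by (simp add: power2_eq_square algebra_simps)
  then show ?thesis unfolding ip_def by (simp add: Re_sum)
qed

lemma ip_nonneg: "0 \<le> Re (ip n p p)"
  unfolding Re_ip by (intro sum_nonneg) auto

lemma wfac_pos: "0 < wfac m"
  unfolding wfac_def by (intro prod_pos) auto

lemma ip_pos: assumes "inW n w v" "v \<noteq> 0" shows "0 < Re (ip n v v)"
proof -
  obtain m where m: "v m \<noteq> 0" using assms(2) by (force simp: fun_eq_iff)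
  then have "m \<in> Mn n" using assms(1) by (auto simp: inW_def Mn_def)
  moreover have "0 < real (wfac m) * (cmod (v m))\<^sup>2" using m wfac_pos[of m] by simp
  ultimately show ?thesis unfolding Re_ip
    by (intro sum_pos2[OF finite_Mn, of m]) auto
qed

definition Mon :: "nat \<Rightarrow> (dir \<Rightarrow> nat) \<Rightarrow> monomial set" where
  "Mon n w = {m. deg m = n \<and> (\<forall>d. wt d m = w d)}"
definition dl :: "monomial \<Rightarrow> cpoly" where "dl m0 = (\<lambda>m. if m = m0 then 1 else 0)"

lemma finite_Mon: "finite (Mon n w)"
  by (rule finite_subset[OF _ finite_Mn[of n]]) (auto simp: Mon_def Mn_def)

lemma inW_expand: assumes inw: "inW n w p" shows "p = (\<Sum>m0\<in>Mon n w. cscale (p m0) (dl m0))"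
proof (rule ext)
  fix m
  have "(\<Sum>m0\<in>Mon n w. cscale (p m0) (dl m0)) m = (\<Sum>m0\<in>Mon n w. if m = m0 then p m0 else 0)"
    unfolding sum_fun_apply by (rule sum.cong) (auto simp: cscale_def dl_def)
  also have "\<dots> = (if m \<in> Mon n w then p m else 0)" by (simp add: finite_Mon)
  also have "\<dots> = p m" using inw by (auto simp: inW_def Mon_def)
  finally show "p m = (\<Sum>m0\<in>Mon n w. cscale (p m0) (dl m0)) m" by simp
qed

lemma Z_fd: "Z n w S \<subseteq> cs.span (dl ` Mon n w)"
proof
  fix p assume "p \<in> Z n w S"
  then have "inW n w p" by (simp add: Z_def)
  then have "p = (\<Sum>m0\<in>Mon n w. cscale (p m0) (dl m0))" by (rule inW_expand)
  also have "\<dots> \<in> cs.span (dl ` Mon n w)"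
    by (intro cs.span_sum cs.span_scale cs.span_base) auto
  finally show "p \<in> cs.span (dl ` Mon n w)" .
qed

lemma dim_Z_empty: "cs.dim (Z n w {}) = card (Mon n w)"
proof -
  have inj: "inj_on dl (Mon n w)" unfolding inj_on_def dl_def by (metis zero_neq_one)
  have sub: "dl ` Mon n w \<subseteq> Z n w {}" by (auto simp: Z_def inW_def dl_def Mon_def split: if_splits)
  have sp: "Z n w {} \<subseteq> cs.span (dl ` Mon n w)" by (rule Z_fd)
  have ind: "cs.independent (dl ` Mon n w)"
  proof
    assume "cs.dependent (dl ` Mon n w)"
    then obtain u v where uv: "v \<in> dl ` Mon n w" "u v \<noteq> 0" "(\<Sum>v\<in>dl ` Mon n w. cscale (u v) v) = 0"
      using cs.dependent_finite[of "dl ` Mon n w"] finite_Mon by auto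
    obtain m0 where m0: "m0 \<in> Mon n w" "v = dl m0" using uv(1) by auto
    have "0 = (\<Sum>v\<in>dl ` Mon n w. cscale (u v) v) m0" using uv(3) by simp
    also have "\<dots> = (\<Sum>m\<in>Mon n w. cscale (u (dl m)) (dl m) m0)"
      by (simp add: sum_fun_apply sum.reindex[OF inj])
    also have "\<dots> = (\<Sum>m\<in>Mon n w. if m0 = m then u (dl m) else 0)"
      by (rule sum.cong) (auto simp: cscale_def dl_def)
    also have "\<dots> = u (dl m0)" using m0 by (simp add: finite_Mon)
    finally show False using uv(2) m0 by simp
  qed
  have "card (dl ` Mon n w) = cs.dim (Z n w {})" by (rule cs.basis_card_eq_dim[OF sub sp ind])
  then show ?thesis using card_image[OF inj] by simp
qed

lemma EF_Hfun: assumes "inW n w v"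
  shows "Eop d (Fop d v) = Fop d (Eop d v) + cscale (of_int (int n - 2 * int (w d))) v"
proof (rule ext)
  fix m
  show "Eop d (Fop d v) m = (Fop d (Eop d v) + cscale (of_int (int n - 2 * int (w d))) v) m"
  proof (cases "v m = 0")
    case True
    then show ?thesis using EF_H[of d v m] by (simp add: cscale_def)
  next
    case False
    then have "deg m = n" "wt d m = w d" using assms by (auto simp: inW_def)
    then show ?thesis using EF_H[of d v m] by (simp add: cscale_def)
  qed
qed

lemma EF_inj: assumes inw: "inW n w v" and wn: "2 * w d < n" and z: "Eop d (Fop d v) = 0"
  shows "v = 0"
proof (rule ccontr)
  assume v0: "v \<noteq> 0"
  define h :: int where "h = int n - 2 * int (w d)"
  have hpos: "0 < h" using wn by (simp add: h_def)
  have "ip n (Eop d (Fop d v)) v = ip n (Fop d (Eop d v)) v + of_int h * ip n v v"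
    using EF_Hfun[OF inw, of d] by (simp add: ip_add_left ip_scale_left h_def)
  also have "ip n (Fop d (Eop d v)) v = ip n (Eop d v) (Eop d v)"
    by (rule S_adj) (simp add: co_lohi(4)[symmetric])
  finally have e: "ip n (Eop d (Fop d v)) v = ip n (Eop d v) (Eop d v) + of_int h * ip n v v" .
  have "ip n (Eop d (Fop d v)) v = 0" unfolding z by (rule ip_zero_left)
  with e have "0 = ip n (Eop d v) (Eop d v) + of_int h * ip n v v" by simp
  then have "Re 0 = Re (ip n (Eop d v) (Eop d v) + of_int h * ip n v v)" by (rule arg_cong)
  then have "0 = Re (ip n (Eop d v) (Eop d v)) + real_of_int h * Re (ip n v v)"
    by simp
  moreover have "0 \<le> Re (ip n (Eop d v) (Eop d v))" by (rule ip_nonneg)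
  moreover have "0 < real_of_int h * Re (ip n v v)" using hpos ip_pos[OF inw v0] by simp
  ultimately show False by linarith
qed


lemma dim_zero_set: "cs.dim {0::cpoly} = 0"
proof -
  have "cs.dim {0::cpoly} = cs.dim (cs.span {})" by simp
  also have "\<dots> = cs.dim ({}::cpoly set)" by (rule cs.dim_span)
  also have "\<dots> = 0" using cs.dim_eq_card_independent[OF cs.independent_empty] by simp
  finally show ?thesis .
qed

lemma step:
  assumes dS: "d \<notin> S" and w1: "1 \<le> w d" and wn: "2 * w d \<le> n"
  shows "cs.dim (Z n w (insert d S)) + cs.dim (Z n (w(d := w d - 1)) S) = cs.dim (Z n w S)"
proof -
  define w' where "w' = w(d := w d - 1)"
  let ?Z1 = "Z n w S" and ?Z0 = "Z n w' S"
  have EZ: "Eop d ` ?Z1 \<subseteq> ?Z0"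
  proof
    fix x assume "x \<in> Eop d ` ?Z1"
    then obtain p where p: "p \<in> ?Z1" "x = Eop d p" by auto
    have "inW n w' x" using E_inW p by (auto simp: Z_def w'_def)
    moreover have "Eop d'' x = 0" if "d'' \<in> S" for d''
    proof -
      have "d'' \<noteq> d" using that dS by auto
      then have "Eop d'' x = Eop d (Eop d'' p)" using EE_comm p(2) by simp
      also have "\<dots> = 0" using p that by (simp add: Z_def S_zero)
      finally show ?thesis .
    qed
    ultimately show "x \<in> ?Z0" by (simp add: Z_def)
  qed
  have FZ: "Fop d ` ?Z0 \<subseteq> ?Z1"
  proof
    fix x assume "x \<in> Fop d ` ?Z0"
    then obtain p where p: "p \<in> ?Z0" "x = Fop d p" by auto
    have ww: "w'(d := w' d + 1) = w" using w1 by (auto simp: w'_def fun_eq_iff)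
    have "inW n w x" using F_inW[of n w' p d] p ww by (auto simp: Z_def)
    moreover have "Eop d'' x = 0" if "d'' \<in> S" for d''
    proof -
      have "d \<noteq> d''" using that dS by auto
      then have "Eop d'' x = Fop d (Eop d'' p)" using EF_comm p(2) by simp
      also have "\<dots> = 0" using p that by (simp add: Z_def S_zero)
      finally show ?thesis .
    qed
    ultimately show "x \<in> ?Z1" by (simp add: Z_def)
  qed
  have ker: "{x\<in>?Z1. Eop d x = 0} = Z n w (insert d S)" by (auto simp: Z_def)
  have RN1: "cs.dim ?Z1 = cs.dim {x\<in>?Z1. Eop d x = 0} + cs.dim (Eop d ` ?Z1)"
    by (rule cs.rank_nullity_sub[OF S_linear Z_subspace Z_fd finite_imageI[OF finite_Mon]])
  have linEF: "Vector_Spaces.linear cscale cscale (\<lambda>x. Eop d (Fop d x))"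
    unfolding Vector_Spaces.linear_iff using cs.vector_space_axioms by (auto simp: S_add S_scale)
  have kerEF: "{x\<in>?Z0. Eop d (Fop d x) = 0} = {0}"
  proof -
    have "w' d = w d - 1" by (simp add: w'_def)
    then have "2 * w' d < n" using w1 wn by simp
    then have "x = 0" if "x \<in> ?Z0" "Eop d (Fop d x) = 0" for x
      using EF_inj[of n w' x d] that by (auto simp: Z_def)
    moreover have "0 \<in> ?Z0" using cs.subspace_0[OF Z_subspace] .
    moreover have "Eop d (Fop d 0) = 0" by (simp add: S_zero)
    ultimately show ?thesis by auto
  qed
  have RN2: "cs.dim ?Z0 = cs.dim {x\<in>?Z0. Eop d (Fop d x) = 0} + cs.dim ((\<lambda>x. Eop d (Fop d x)) ` ?Z0)"
    by (rule cs.rank_nullity_sub[OF linEF Z_subspace Z_fd finite_imageI[OF finite_Mon]])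
  then have RN2': "cs.dim ?Z0 = cs.dim ((\<lambda>x. Eop d (Fop d x)) ` ?Z0)"
    using kerEF dim_zero_set by simp
  have sub1: "(\<lambda>x. Eop d (Fop d x)) ` ?Z0 \<subseteq> Eop d ` ?Z1" using FZ by auto
  have sp1: "Eop d ` ?Z1 \<subseteq> cs.span (dl ` Mon n w')" using EZ Z_fd by blast
  have le1: "cs.dim ((\<lambda>x. Eop d (Fop d x)) ` ?Z0) \<le> cs.dim (Eop d ` ?Z1)"
    by (rule cs.fd_dim_mono[OF sub1 sp1 finite_imageI[OF finite_Mon]])
  have le2: "cs.dim (Eop d ` ?Z1) \<le> cs.dim ?Z0"
    by (rule cs.fd_dim_mono[OF EZ Z_fd finite_imageI[OF finite_Mon]])
  show ?thesis using RN1 RN2' le1 le2 ker by (simp add: w'_def)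
qed

lemma step0: assumes "w d = 0" shows "Z n w (insert d S) = Z n w S"
  using E_zero_wt[of n w _ d] assms by (auto simp: Z_def)

lemma step_gen:
  assumes dS: "d \<notin> S" and wn: "2 * w d \<le> n"
  shows "cs.dim (Z n w (insert d S)) + (if 1 \<le> w d then cs.dim (Z n (w(d := w d - 1)) S) else 0)
       = cs.dim (Z n w S)"
  using step[of d S w n] step0[of w d n S] dS wn by (cases "1 \<le> w d") auto

lemma sum_interval_ind: fixes lo hi N :: int
  shows "(\<Sum>x\<in>{0..N}. if lo \<le> x \<and> x \<le> hi then 1 else 0 :: int) = max 0 (min N hi - max 0 lo + 1)"
proof -
  have "(\<Sum>x\<in>{0..N}. if lo \<le> x \<and> x \<le> hi then 1 else 0 :: int) = int (card {x\<in>{0..N}. lo \<le> x \<and> x \<le> hi})"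
    by (simp add: sum.inter_filter[symmetric])
  also have "{x\<in>{0..N}. lo \<le> x \<and> x \<le> hi} = {max 0 lo..min N hi}" by auto
  also have "int (card {max 0 lo..min N hi}) = max 0 (min N hi - max 0 lo + 1)" by simp
  finally show ?thesis .
qed

definition wI :: "int \<Rightarrow> int \<Rightarrow> int \<Rightarrow> int \<Rightarrow> int \<Rightarrow> int" where
  "wI N k l a c = (\<Sum>a1\<in>{0..N}. if l \<le> a1 \<and> a1 \<le> c - l \<and> k \<le> a - a1 \<and> a - a1 \<le> N - c - k then 1 else 0)"

lemma wI_closed: "wI N k l a c = max 0 (min N (min (c - l) (a - k)) - max 0 (max l (a - N + c + k)) + 1)"
proof -
  have "wI N k l a c = (\<Sum>a1\<in>{0..N}. if max l (a - N + c + k) \<le> a1 \<and> a1 \<le> min (c - l) (a - k) then 1 else 0)"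
    unfolding wI_def by (rule sum.cong) auto
  then show ?thesis by (simp only: sum_interval_ind)
qed

lemma wI_closed2: assumes "0 \<le> l" "c \<le> N"
  shows "wI N k l a c = max 0 (min (c - l) (a - k) - max l (a - N + c + k) + 1)"
proof -
  have 1: "min N (min (c - l) (a - k)) = min (c - l) (a - k)" using assms by (auto simp: min_def)
  have 2: "max 0 (max l (a - N + c + k)) = max l (a - N + c + k)" using assms by (auto simp: max_def)
  show ?thesis unfolding wI_closed 1 2 ..
qed

lemma dwI: fixes N k l a c :: int
  assumes "0 \<le> k" "0 \<le> l" "0 \<le> a" "2 * a \<le> N" "-1 \<le> c" "c \<le> N"
  shows "wI N k l a c - wI N k l (a - 1) c = (if k + l \<le> a \<and> a \<le> N - c - k + l \<and> a \<le> c + k - l then 1 else 0)"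
proof -
  have e1: "wI N k l a c = max 0 (min (c - l) (a - k) - max l (a - N + c + k) + 1)"
    using assms by (intro wI_closed2) auto
  have e2: "wI N k l (a - 1) c = max 0 (min (c - l) (a - 1 - k) - max l (a - 1 - N + c + k) + 1)"
    using assms by (intro wI_closed2) auto
  show ?thesis unfolding e1 e2 using assms by (smt (z3))
qed

lemma count_diag: fixes A d N :: int
  assumes "0 \<le> A" "A \<le> N"
  shows "(\<Sum>k\<in>{0..N}. \<Sum>l\<in>{0..N}. if k + l \<le> A \<and> k - l = d then 1 else 0 :: int)
         = (if \<bar>d\<bar> \<le> A then (A - \<bar>d\<bar>) div 2 + 1 else 0)"
proof -
  have inner: "(\<Sum>l\<in>{0..N}. if k + l \<le> A \<and> k - l = d then 1 else 0 :: int)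
      = (if d \<le> k \<and> k \<le> N + d \<and> 2 * k \<le> A + d then 1 else 0)" for k
  proof -
    have "(\<Sum>l\<in>{0..N}. if k + l \<le> A \<and> k - l = d then 1 else 0 :: int)
        = (\<Sum>l\<in>{0..N}. if l = k - d then (if 2 * k \<le> A + d then 1 else 0) else 0)"
      by (rule sum.cong) auto
    also have "\<dots> = (if k - d \<in> {0..N} then (if 2 * k \<le> A + d then 1 else 0) else 0)"
      by (rule sum.delta) simp
    finally show ?thesis by auto
  qed
  have "(\<Sum>k\<in>{0..N}. \<Sum>l\<in>{0..N}. if k + l \<le> A \<and> k - l = d then 1 else 0 :: int)
      = (\<Sum>k\<in>{0..N}. if d \<le> k \<and> k \<le> min (N + d) ((A + d) div 2) then 1 else 0)"
    unfolding inner by (rule sum.cong) auto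
  also have "\<dots> = max 0 (min N (min (N + d) ((A + d) div 2)) - max 0 d + 1)"
    by (rule sum_interval_ind)
  also have "\<dots> = (if \<bar>d\<bar> \<le> A then (A - \<bar>d\<bar>) div 2 + 1 else 0)"
  proof -
    define q where "q = (A + d) div 2"
    have q1: "2 * q \<le> A + d" and q2: "A + d \<le> 2 * q + 1" unfolding q_def by linarith+
    have r: "(A - \<bar>d\<bar>) div 2 = (if 0 \<le> d then q - d else q)"
      unfolding q_def by (auto simp: abs_if)
    show ?thesis unfolding r q_def[symmetric] using q1 q2 assms
      by (cases "0 \<le> d") (simp_all add: max_def min_def)
  qed
  finally show ?thesis .
qed


definition wv :: "nat \<Rightarrow> nat \<Rightarrow> nat \<Rightarrow> dir \<Rightarrow> nat" where
  "wv a b c = (\<lambda>d. case d of DA \<Rightarrow> a | DB \<Rightarrow> b | DC \<Rightarrow> c)"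

lemma Mon_wv: "Mon n (wv a b c) = {m. deg m = n \<and> wt DA m = a \<and> wt DB m = b \<and> wt DC m = c}"
  unfolding Mon_def wv_def all_dir by simp

definition ent :: "int \<Rightarrow> int \<Rightarrow> int \<Rightarrow> int \<Rightarrow> int \<times> int \<times> int \<times> int \<Rightarrow> idx \<Rightarrow> int" where
  "ent N a b c t4 x = (case t4 of (k, l, a1, b1) \<Rightarrow> case x of (i, j, kk) \<Rightarrow>
     (let x111 = l + max 0 (a1 + b1 - c); x110 = k + max 0 (a - a1 + b - b1 - (N - c)) in
      if kk then (if i then (if j then x111 else a1 - x111) else (if j then b1 - x111 else c - a1 - b1 + x111))
      else (if i then (if j then x110 else a - a1 - x110) else (if j then b - b1 - x110 else N - c - (a - a1) - (b - b1) + x110))))"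

definition Pab :: "int \<Rightarrow> int \<Rightarrow> int \<Rightarrow> int \<Rightarrow> int \<Rightarrow> int \<Rightarrow> bool" where
  "Pab N c k l a a1 \<longleftrightarrow> l \<le> a1 \<and> a1 \<le> c - l \<and> k \<le> a - a1 \<and> a - a1 \<le> N - c - k"

definition T4 :: "int \<Rightarrow> int \<Rightarrow> int \<Rightarrow> int \<Rightarrow> (int \<times> int \<times> int \<times> int) set" where
  "T4 N a b c = {x \<in> {0..N} \<times> {0..N} \<times> {0..N} \<times> {0..N}.
      case x of (k, l, a1, b1) \<Rightarrow> Pab N c k l a a1 \<and> Pab N c k l b b1}"

definition psi :: "int \<Rightarrow> int \<Rightarrow> int \<Rightarrow> int \<Rightarrow> monomial \<Rightarrow> int \<times> int \<times> int \<times> int" where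
  "psi N a b c m = (let a1 = int (m (True,False,True)) + int (m (True,True,True));
                        b1 = int (m (False,True,True)) + int (m (True,True,True)) in
     (int (m (True,True,False)) - max 0 (a - a1 + b - b1 - (N - c)),
      int (m (True,True,True)) - max 0 (a1 + b1 - c), a1, b1))"

definition phi :: "int \<Rightarrow> int \<Rightarrow> int \<Rightarrow> int \<Rightarrow> int \<times> int \<times> int \<times> int \<Rightarrow> monomial" where
  "phi N a b c t4 = (\<lambda>x. nat (ent N a b c t4 x))"

lemma ent_nonneg: assumes "t4 \<in> T4 N a b c" shows "0 \<le> ent N a b c t4 x"
proof -
  obtain k l a1 b1 where t: "t4 = (k, l, a1, b1)" by (cases t4) auto
  obtain i j kk where x: "x = (i, j, kk)" by (cases x) auto
  have "0 \<le> k" "0 \<le> l" "Pab N c k l a a1" "Pab N c k l b b1" using assms by (auto simp: T4_def t)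
  then show ?thesis unfolding t x ent_def Pab_def Let_def
    by (cases i; cases j; cases kk) (auto simp: max_def)
qed

lemma card_Mon: fixes n a b c :: nat
  assumes "c \<le> n"
  shows "int (card (Mon n (wv a b c))) = int (card (T4 (int n) (int a) (int b) (int c)))"
proof -
  let ?N = "int n" and ?a = "int a" and ?b = "int b" and ?c = "int c"
  let ?M = "Mon n (wv a b c)" and ?T = "T4 ?N ?a ?b ?c"
  have eqs: "int n = int (m (False,False,False)) + int (m (False,False,True)) + int (m (False,True,False)) + int (m (False,True,True))
        + int (m (True,False,False)) + int (m (True,False,True)) + int (m (True,True,False)) + int (m (True,True,True))"
     "int a = int (m (True,False,False)) + int (m (True,False,True)) + int (m (True,True,False)) + int (m (True,True,True))"
     "int b = int (m (False,True,False)) + int (m (False,True,True)) + int (m (True,True,False)) + int (m (True,True,True))"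
     "int c = int (m (False,False,True)) + int (m (False,True,True)) + int (m (True,False,True)) + int (m (True,True,True))"
    if "m \<in> ?M" for m
    using that unfolding Mon_wv by (auto simp: deg_expand wt_expand)
  have "bij_betw (psi ?N ?a ?b ?c) ?M ?T"
  proof (rule bij_betw_byWitness[where f' = "phi ?N ?a ?b ?c"])
    show "\<forall>m\<in>?M. phi ?N ?a ?b ?c (psi ?N ?a ?b ?c m) = m"
    proof
      fix m assume m: "m \<in> ?M"
      note e = eqs[OF m]
      show "phi ?N ?a ?b ?c (psi ?N ?a ?b ?c m) = m"
      proof (rule ext)
        fix x :: idx
        obtain i j kk where x: "x = (i, j, kk)" by (cases x) auto
        have "ent ?N ?a ?b ?c (psi ?N ?a ?b ?c m) x = int (m x)"
          unfolding x ent_def psi_def Let_def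
          by (cases i; cases j; cases kk) (simp_all add: e)
        then show "phi ?N ?a ?b ?c (psi ?N ?a ?b ?c m) x = m x" by (simp add: phi_def)
      qed
    qed
    show "\<forall>t\<in>?T. psi ?N ?a ?b ?c (phi ?N ?a ?b ?c t) = t"
    proof
      fix t assume t: "t \<in> ?T"
      obtain k l a1 b1 where tt: "t = (k, l, a1, b1)" by (cases t) auto
      have nn: "int (phi ?N ?a ?b ?c t x) = ent ?N ?a ?b ?c t x" for x
        using ent_nonneg[OF t] by (simp add: phi_def)
      have "0 \<le> k" "0 \<le> l" "Pab ?N ?c k l ?a a1" "Pab ?N ?c k l ?b b1" using t by (auto simp: T4_def tt)
      then show "psi ?N ?a ?b ?c (phi ?N ?a ?b ?c t) = t"
        unfolding psi_def Let_def nn unfolding tt ent_def Pab_def Let_def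
        by simp
    qed
    show "psi ?N ?a ?b ?c ` ?M \<subseteq> ?T"
    proof
      fix t assume "t \<in> psi ?N ?a ?b ?c ` ?M"
      then obtain m where m: "m \<in> ?M" "t = psi ?N ?a ?b ?c m" by auto
      note e = eqs[OF m(1)]
      show "t \<in> ?T" unfolding m(2) T4_def psi_def Pab_def Let_def
        using e assms by (auto simp: max_def)
    qed
    show "phi ?N ?a ?b ?c ` ?T \<subseteq> ?M"
    proof
      fix m assume "m \<in> phi ?N ?a ?b ?c ` ?T"
      then obtain t where t: "t \<in> ?T" "m = phi ?N ?a ?b ?c t" by auto
      obtain k l a1 b1 where tt: "t = (k, l, a1, b1)" by (cases t) auto
      have nn: "int (m x) = ent ?N ?a ?b ?c t x" for x
        using ent_nonneg[OF t(1)] by (simp add: phi_def t(2))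
      have "0 \<le> k" "0 \<le> l" "Pab ?N ?c k l ?a a1" "Pab ?N ?c k l ?b b1" using t by (auto simp: T4_def tt)
      then have "int (deg m) = ?N \<and> int (wt DA m) = ?a \<and> int (wt DB m) = ?b \<and> int (wt DC m) = ?c"
        unfolding deg_expand wt_expand of_nat_add nn unfolding tt ent_def Pab_def Let_def
        by simp
      then show "m \<in> ?M" unfolding Mon_wv by simp
    qed
  qed
  then show ?thesis by (simp add: bij_betw_same_card)
qed


lemma card_T4: "int (card (T4 N a b c)) = (\<Sum>k\<in>{0..N}. \<Sum>l\<in>{0..N}. wI N k l a c * wI N k l b c)"
proof -
  let ?B = "{0..N} \<times> {0..N} \<times> {0..N} \<times> {0..N}"
  let ?P = "\<lambda>x. case x of (k, l, a1, b1) \<Rightarrow> Pab N c k l a a1 \<and> Pab N c k l b b1"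
  have "int (card (T4 N a b c)) = (\<Sum>x\<in>{x\<in>?B. ?P x}. 1)"
    unfolding T4_def by simp
  also have "\<dots> = (\<Sum>x\<in>?B. if ?P x then 1 else 0)"
    by (rule sum.inter_filter) simp
  also have "\<dots> = (\<Sum>k\<in>{0..N}. \<Sum>l\<in>{0..N}. \<Sum>a1\<in>{0..N}. \<Sum>b1\<in>{0..N}.
        (if Pab N c k l a a1 then 1 else 0) * (if Pab N c k l b b1 then 1 else 0))"
    by (simp only: sum.cartesian_product) (intro sum.cong refl, auto split: if_splits)
  also have "\<dots> = (\<Sum>k\<in>{0..N}. \<Sum>l\<in>{0..N}. wI N k l a c * wI N k l b c)"
    unfolding wI_def Pab_def sum_product by simp
  finally show ?thesis .
qed

definition Nf :: "int \<Rightarrow> int \<Rightarrow> int \<Rightarrow> int \<Rightarrow> int" where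
  "Nf N a b c = (\<Sum>k\<in>{0..N}. \<Sum>l\<in>{0..N}. wI N k l a c * wI N k l b c)"

lemma card_Mon_Nf: fixes n a b c :: nat assumes "c \<le> n"
  shows "int (card (Mon n (wv a b c))) = Nf (int n) (int a) (int b) (int c)"
  using card_Mon[OF assms] card_T4 by (simp add: Nf_def)

lemma polar_Y: "s \<noteq> t \<Longrightarrow> polar s t p = Yop s t p"
  by (auto simp: polar_def Let_def Y_eq fun_eq_iff)

lemma raise_eq: "raiseA = Eop DA" "raiseB = Eop DB" "raiseC = Eop DC"
  by (auto simp: raiseA_def raiseB_def raiseC_def Sop_def polar_Y fun_eq_iff)

lemma wt_eq: "wtA = wt DA" "wtB = wt DB" "wtC = wt DC"
  by (auto simp: wtA_def wtB_def wtC_def wt_def fun_eq_iff)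

lemma hwv_Z: "hwv n a b c = Z n (wv a b c) UNIV"
proof -
  have e: "(\<forall>d\<in>UNIV. Eop d p = 0) \<longleftrightarrow> Eop DA p = 0 \<and> Eop DB p = 0 \<and> Eop DC p = 0" for p
    using all_dir[of "\<lambda>d. Eop d p = 0"] by simp
  show ?thesis
    unfolding hwv_def Z_def inW_def raise_eq wt_eq all_dir wv_def e
    by (auto simp: fun_eq_iff)
qed

lemma mu_Z: "mu n a b c = cs.dim (Z n (wv a b c) UNIV)"
  unfolding mu_def hwv_Z ..

lemma wv_upd: "(wv a b c)(DA := x) = wv x b c" "(wv a b c)(DB := x) = wv a x c" "(wv a b c)(DC := x) = wv a b x"
  by (auto simp: wv_def fun_eq_iff split: dir.splits)

lemma wv_app: "wv a b c DA = a" "wv a b c DB = b" "wv a b c DC = c"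
  by (simp_all add: wv_def)

lemma UNIV_dir: "(UNIV :: dir set) = insert DC {DA, DB}"
  using dir.exhaust by auto

lemma R3: assumes "2 * c \<le> n"
  shows "cs.dim (Z n (wv a b c) UNIV) + (if 1 \<le> c then cs.dim (Z n (wv a b (c - 1)) {DA, DB}) else 0)
     = cs.dim (Z n (wv a b c) {DA, DB})"
proof -
  have "cs.dim (Z n (wv a b c) (insert DC {DA, DB})) + (if 1 \<le> wv a b c DC then cs.dim (Z n ((wv a b c)(DC := wv a b c DC - 1)) {DA, DB}) else 0)
     = cs.dim (Z n (wv a b c) {DA, DB})"
    by (rule step_gen) (auto simp: wv_def assms)
  then show ?thesis unfolding wv_app wv_upd UNIV_dir[symmetric] .
qed

lemma R2: assumes "2 * b \<le> n"
  shows "cs.dim (Z n (wv a b c) {DA, DB}) + (if 1 \<le> b then cs.dim (Z n (wv a (b - 1) c) {DA}) else 0)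
     = cs.dim (Z n (wv a b c) {DA})"
proof -
  have "cs.dim (Z n (wv a b c) (insert DB {DA})) + (if 1 \<le> wv a b c DB then cs.dim (Z n ((wv a b c)(DB := wv a b c DB - 1)) {DA}) else 0)
     = cs.dim (Z n (wv a b c) {DA})"
    by (rule step_gen) (auto simp: wv_def assms)
  moreover have "insert DB {DA} = {DA, DB}" by auto
  ultimately show ?thesis unfolding wv_app wv_upd by simp
qed

lemma R1: assumes "2 * a \<le> n"
  shows "int (cs.dim (Z n (wv a b c) {DA})) + (if 1 \<le> a then int (card (Mon n (wv (a - 1) b c))) else 0)
     = int (card (Mon n (wv a b c)))"
proof -
  have "cs.dim (Z n (wv a b c) (insert DA {})) + (if 1 \<le> wv a b c DA then cs.dim (Z n ((wv a b c)(DA := wv a b c DA - 1)) {}) else 0)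
     = cs.dim (Z n (wv a b c) {})"
    by (rule step_gen) (auto simp: wv_def assms)
  then show ?thesis unfolding wv_app wv_upd dim_Z_empty by (cases "1 \<le> a") auto
qed


lemma wI_neg: "0 \<le> k \<Longrightarrow> wI N k l (-1) c = 0"
  unfolding wI_def by (intro sum.neutral) auto

lemma Nf_neg: "Nf N (-1) q z = 0" "Nf N p (-1) z = 0"
  unfolding Nf_def by (auto intro!: sum.neutral simp: wI_neg)

definition Gf :: "int \<Rightarrow> int \<Rightarrow> int \<Rightarrow> int \<Rightarrow> int" where
  "Gf N x y z = (\<Sum>k\<in>{0..N}. \<Sum>l\<in>{0..N}.
     (if k + l \<le> x \<and> x \<le> N - z - k + l \<and> x \<le> z + k - l then 1 else 0) *
     (if k + l \<le> y \<and> y \<le> N - z - k + l \<and> y \<le> z + k - l then 1 else 0))"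

lemma Gf_neg: "Gf N x y (-1) = 0"
  unfolding Gf_def by (intro sum.neutral ballI) auto

lemma Nf_diff: "Nf N x y z - Nf N (x - 1) y z - Nf N x (y - 1) z + Nf N (x - 1) (y - 1) z
   = (\<Sum>k\<in>{0..N}. \<Sum>l\<in>{0..N}. (wI N k l x z - wI N k l (x - 1) z) * (wI N k l y z - wI N k l (y - 1) z))"
  unfolding Nf_def by (simp add: sum_subtractf[symmetric] sum.distrib[symmetric] algebra_simps)

lemma Nf_Gf: assumes "0 \<le> x" "0 \<le> y" "2 * x \<le> N" "2 * y \<le> N" "-1 \<le> z" "z \<le> N"
  shows "Nf N x y z - Nf N (x - 1) y z - Nf N x (y - 1) z + Nf N (x - 1) (y - 1) z = Gf N x y z"
  unfolding Nf_diff Gf_def using assms by (intro sum.cong refl) (simp add: dwI)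

lemma G_formula: fixes x y z n :: nat
  assumes "2 * x \<le> n" "2 * y \<le> n" "z \<le> n"
  shows "int (cs.dim (Z n (wv x y z) {DA, DB})) = Gf (int n) (int x) (int y) (int z)"
proof -
  let ?F = "\<lambda>p q. Nf (int n) p q (int z)"
  have NF: "int (card (Mon n (wv p q z))) = ?F (int p) (int q)" for p q
    using card_Mon_Nf[OF assms(3)] .
  have dA: "int (cs.dim (Z n (wv x q z) {DA})) = ?F (int x) (int q) - ?F (int x - 1) (int q)" for q
    using R1[OF assms(1), of q z] NF[of x q] NF[of "x - 1" q] Nf_neg
    by (cases "x = 0") (auto simp: of_nat_diff)
  have "int (cs.dim (Z n (wv x y z) {DA, DB})) =
      int (cs.dim (Z n (wv x y z) {DA})) - (if 1 \<le> y then int (cs.dim (Z n (wv x (y - 1) z) {DA})) else 0)"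
    using R2[OF assms(2), of x z] by (cases "1 \<le> y") auto
  also have "\<dots> = ?F (int x) (int y) - ?F (int x - 1) (int y) - ?F (int x) (int y - 1) + ?F (int x - 1) (int y - 1)"
    using dA[of y] dA[of "y - 1"] Nf_neg by (cases "y = 0") (auto simp: of_nat_diff)
  also have "\<dots> = Gf (int n) (int x) (int y) (int z)"
    by (rule Nf_Gf) (use assms in auto)
  finally show ?thesis .
qed

lemma mu_Gf: fixes n a b c :: nat
  assumes "2 * a \<le> n" "2 * b \<le> n" "2 * c \<le> n"
  shows "int (mu n a b c) = Gf (int n) (int a) (int b) (int c) - Gf (int n) (int a) (int b) (int c - 1)"
proof -
  have "int (mu n a b c) = int (cs.dim (Z n (wv a b c) {DA, DB}))
      - (if 1 \<le> c then int (cs.dim (Z n (wv a b (c - 1)) {DA, DB})) else 0)"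
    unfolding mu_Z using R3[OF assms(3), of a b] by (cases "1 \<le> c") auto
  also have "\<dots> = Gf (int n) (int a) (int b) (int c) - Gf (int n) (int a) (int b) (int c - 1)"
    using G_formula[of a n b c] G_formula[of a n b "c - 1"] assms Gf_neg
    by (cases "c = 0") (auto simp: of_nat_diff)
  finally show ?thesis .
qed

lemma if_and_1: "(if P \<and> Q then 1 else 0) = (if P then 1 else 0) * (if Q then 1 else (0::int))"
  by simp

lemma Gf_diff: fixes N a b c :: int
  assumes "0 \<le> a" "0 \<le> b" "2 * a \<le> N" "2 * b \<le> N"
  shows "Gf N a b c - Gf N a b (c - 1) =
     (\<Sum>k\<in>{0..N}. \<Sum>l\<in>{0..N}. if k + l \<le> min a b \<and> k - l = max a b - c then 1 else 0)
   - (\<Sum>k\<in>{0..N}. \<Sum>l\<in>{0..N}. if k + l \<le> min a b \<and> k - l = N - c + 1 - max a b then 1 else 0)"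
proof -
  have pt: "(if k + l \<le> a \<and> a \<le> N - c - k + l \<and> a \<le> c + k - l then 1 else 0) *
     (if k + l \<le> b \<and> b \<le> N - c - k + l \<and> b \<le> c + k - l then 1 else 0)
   - (if k + l \<le> a \<and> a \<le> N - (c - 1) - k + l \<and> a \<le> (c - 1) + k - l then 1 else 0) *
     (if k + l \<le> b \<and> b \<le> N - (c - 1) - k + l \<and> b \<le> (c - 1) + k - l then 1 else 0)
   = (if k + l \<le> min a b \<and> k - l = max a b - c then 1 else 0)
   - (if k + l \<le> min a b \<and> k - l = N - c + 1 - max a b then 1 else (0::int))"
    if "0 \<le> k" "0 \<le> l" for k l
  proof -
    have "(if (k + l \<le> a \<and> a \<le> N - c - k + l \<and> a \<le> c + k - l) \<and> (k + l \<le> b \<and> b \<le> N - c - k + l \<and> b \<le> c + k - l) then 1 else 0)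
     - (if (k + l \<le> a \<and> a \<le> N - (c - 1) - k + l \<and> a \<le> (c - 1) + k - l) \<and> (k + l \<le> b \<and> b \<le> N - (c - 1) - k + l \<and> b \<le> (c - 1) + k - l) then 1 else 0)
     = (if k + l \<le> min a b \<and> k - l = max a b - c then 1 else 0)
     - (if k + l \<le> min a b \<and> k - l = N - c + 1 - max a b then 1 else (0::int))"
      using assms that by (smt (z3))
    then show ?thesis by (simp only: if_and_1)
  qed
  show ?thesis unfolding Gf_def sum_subtractf[symmetric]
    by (intro sum.cong refl pt) auto
qed


lemma mu_closed: fixes n a b c :: nat
  assumes "a \<le> c" "b \<le> c" "2 * c \<le> n"
  shows "int (mu n a b c) = (if int c \<le> int a + int b then (int a + int b - int c) div 2 + 1 else 0)
     - (if int n + 1 \<le> int a + int b + int c then (int a + int b + int c - int n - 1) div 2 + 1 else 0)"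
proof -
  let ?N = "int n" and ?A = "min (int a) (int b)" and ?B = "max (int a) (int b)"
  have an: "2 * a \<le> n" "2 * b \<le> n" using assms by auto
  have "int (mu n a b c) = Gf ?N (int a) (int b) (int c) - Gf ?N (int a) (int b) (int c - 1)"
    by (rule mu_Gf) (use an assms in auto)
  also have "\<dots> = (\<Sum>k\<in>{0..?N}. \<Sum>l\<in>{0..?N}. if k + l \<le> ?A \<and> k - l = ?B - int c then 1 else 0)
   - (\<Sum>k\<in>{0..?N}. \<Sum>l\<in>{0..?N}. if k + l \<le> ?A \<and> k - l = ?N - int c + 1 - ?B then 1 else 0)"
    by (rule Gf_diff) (use an in auto)
  also have "\<dots> = (if \<bar>?B - int c\<bar> \<le> ?A then (?A - \<bar>?B - int c\<bar>) div 2 + 1 else 0)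
     - (if \<bar>?N - int c + 1 - ?B\<bar> \<le> ?A then (?A - \<bar>?N - int c + 1 - ?B\<bar>) div 2 + 1 else 0)"
  proof -
    have A0: "0 \<le> ?A" and AN: "?A \<le> ?N" using an by auto
    show ?thesis unfolding count_diag[OF A0 AN] ..
  qed
  also have "\<bar>?B - int c\<bar> = int c - ?B" using assms by auto
  also have "\<bar>?N - int c + 1 - ?B\<bar> = ?N - int c + 1 - ?B" using assms by auto
  also have "?A - (int c - ?B) = int a + int b - int c" by (simp add: min_def max_def)
  also have "?A - (?N - int c + 1 - ?B) = int a + int b + int c - ?N - 1" by (simp add: min_def max_def)
  also have "(int c - ?B \<le> ?A) = (int c \<le> int a + int b)" by (auto simp: min_def max_def)
  also have "(?N - int c + 1 - ?B \<le> ?A) = (?N + 1 \<le> int a + int b + int c)" by (auto simp: min_def max_def)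
  finally show ?thesis .
qed

theorem lemma6p3:
  fixes n a b c :: nat
  assumes "a \<le> c" and "b \<le> c" and "2 * c \<le> n"
  shows "(c > a + b \<longrightarrow> mu n a b c = 0)
       \<and> (c \<le> a + b \<and> n \<ge> a + b + c \<longrightarrow>
            int (mu n a b c) = \<lfloor>(real a + real b - real c) / 2\<rfloor> + 1)
       \<and> (c \<le> a + b \<and> n \<le> a + b + c \<longrightarrow>
            int (mu n a b c) = \<lfloor>(real a + real b - real c) / 2\<rfloor>
                               - \<lceil>(real a + real b + real c - real n) / 2\<rceil> + 1)"
proof -
  note key = mu_closed[OF assms]
  have fl: "\<lfloor>(real a + real b - real c) / 2\<rfloor> = (int a + int b - int c) div 2"
  proof -
    have "(real a + real b - real c) / 2 = real_of_int (int a + int b - int c) / real_of_int 2" by simp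
    then show ?thesis by (simp only: floor_divide_of_int_eq)
  qed
  have cl: "\<lceil>(real a + real b + real c - real n) / 2\<rceil> = - ((int n - int a - int b - int c) div 2)"
  proof -
    have "- ((real a + real b + real c - real n) / 2) = real_of_int (int n - int a - int b - int c) / real_of_int 2"
      by (simp add: field_simps)
    then show ?thesis unfolding ceiling_def by (simp only: floor_divide_of_int_eq)
  qed
  show ?thesis
  proof (intro conjI impI)
    assume "a + b < c"
    then have "int (mu n a b c) = 0" using key assms by auto
    then show "mu n a b c = 0" by simp
  next
    assume "c \<le> a + b \<and> a + b + c \<le> n"
    then show "int (mu n a b c) = \<lfloor>(real a + real b - real c) / 2\<rfloor> + 1"
      using key unfolding fl by auto
  next
    assume h: "c \<le> a + b \<and> n \<le> a + b + c"
    have e: "(if int n + 1 \<le> int a + int b + int c then (int a + int b + int c - int n - 1) div 2 + 1 else 0)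
        = - ((int n - int a - int b - int c) div 2)"
      using h by presburger
    show "int (mu n a b c) = \<lfloor>(real a + real b - real c) / 2\<rfloor> - \<lceil>(real a + real b + real c - real n) / 2\<rceil> + 1"
      using key h unfolding fl cl e by auto
  qed
qed

end
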